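(* Let $\mathcal{T}_S,\mathcal{T}_B$ be propositional theories, $V_A$ a set of propositional variables, and let $\langle\mathcal{T}^l,\mathcal{T}^u\rangle$ be an $\alpha$-abstraction from $\mathcal{T}_S$ with respect to $\mathcal{T}_B$ over $V_A$ which is exact, i.e. $\mathcal{T}_B\models\mathcal{T}^l\equiv\mathcal{T}^u$. Then $\langle\mathcal{T}^l,\mathcal{T}^u\rangle$ is the tightest abstraction: $\mathcal{T}_B\models \mathcal{T}^l\equiv \mathrm{wsc}(\mathcal{T}_S;\mathcal{T}_B;V_A)$ and $\mathcal{T}_B\models \mathcal{T}^u\equiv \mathrm{snc}(\mathcal{T}_S;\mathcal{T}_B;V_A)$; in particular for every formula $C$ over $V_A$, $\mathcal{T}_B\models C\to\mathcal{T}_S$ iff $\mathcal{T}_B\models C\to\mathcal{T}^l$, and for every formula $D$ over $V_A$, $\mathcal{T}_B\models\mathcal{T}_S\to D$ iff $\mathcal{T}_B\models \mathcal{T}^u\to D$.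
   Context: Classical propositional logic. A theory is a finite set of propositional formulas, identified with the conjunction of its elements (the empty theory is identified with $\top$). A formula is "over" a set $W$ of propositional variables if all variables occurring in it belong to $W$. $\mathcal{T}\models B$ means every truth assignment to the variables involved that satisfies $\mathcal{T}$ also satisfies $B$. Propositional quantifiers are abbreviations: $\exists p\,B := B[p:=\bot]\lor B[p:=\top]$ and $\forall p\,B := B[p:=\bot]\land B[p:=\top]$; for a finite set $V=\{p_1,\dots,p_k\}$, $\exists V$ and $\forall V$ denote iterated quantifiers. For formulas $A,\mathcal{T}$ and a set $W$ of variables, let $V$ be the set of variables occurring in $A$ or $\mathcal{T}$ but not in $W$, and define $\mathrm{snc}(A;\mathcal{T};W):=\exists V(\mathcal{T}\land A)$ and $\mathrm{wsc}(A;\mathcal{T};W):=\forall V(\mathcal{T}\to A)$. An $\alpha$-abstraction from $\mathcal{T}_S$ with respect to $\mathcal{T}_B$ over $V_A$ is a pair $\langle\mathcal{T}^l,\mathcal{T}^u\rangle$ of theories over $V_A$ such that (a) for every formula $C$ over $V_A$: if $\mathcal{T}_B\models C\to\mathcal{T}^l$ then $\mathcal{T}_B\models C\to\mathcal{T}_S$; and (b) for every formula $D$ over $V_A$: if $\mathcal{T}_B\models \mathcal{T}^u\to D$ then $\mathcal{T}_B\models\mathcal{T}_S\to D$. *)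

theory Defs
  imports Main
begin

datatype 'v form =
    Var 'v | Bot | Top | Neg "'v form"
  | And "'v form" "'v form" | Or "'v form" "'v form"
  | Imp "'v form" "'v form" | Iff "'v form" "'v form"

fun eval :: "('v \<Rightarrow> bool) \<Rightarrow> 'v form \<Rightarrow> bool" where
  "eval s (Var p) = s p"
| "eval s Bot = False"
| "eval s Top = True"
| "eval s (Neg a) = (\<not> eval s a)"
| "eval s (And a b) = (eval s a \<and> eval s b)"
| "eval s (Or a b) = (eval s a \<or> eval s b)"
| "eval s (Imp a b) = (eval s a \<longrightarrow> eval s b)"
| "eval s (Iff a b) = (eval s a \<longleftrightarrow> eval s b)"

fun vars :: "'v form \<Rightarrow> 'v set" where
  "vars (Var p) = {p}"
| "vars Bot = {}"
| "vars Top = {}"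
| "vars (Neg a) = vars a"
| "vars (And a b) = vars a \<union> vars b"
| "vars (Or a b) = vars a \<union> vars b"
| "vars (Imp a b) = vars a \<union> vars b"
| "vars (Iff a b) = vars a \<union> vars b"

fun subst :: "'v form \<Rightarrow> 'v \<Rightarrow> 'v form \<Rightarrow> 'v form" where
  "subst (Var q) p c = (if q = p then c else Var q)"
| "subst Bot p c = Bot"
| "subst Top p c = Top"
| "subst (Neg a) p c = Neg (subst a p c)"
| "subst (And a b) p c = And (subst a p c) (subst b p c)"
| "subst (Or a b) p c = Or (subst a p c) (subst b p c)"
| "subst (Imp a b) p c = Imp (subst a p c) (subst b p c)"
| "subst (Iff a b) p c = Iff (subst a p c) (subst b p c)"

definition ex1 :: "'v \<Rightarrow> 'v form \<Rightarrow> 'v form" where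
  "ex1 p b = Or (subst b p Bot) (subst b p Top)"

definition all1 :: "'v \<Rightarrow> 'v form \<Rightarrow> 'v form" where
  "all1 p b = And (subst b p Bot) (subst b p Top)"

definition exs :: "'v::linorder set \<Rightarrow> 'v form \<Rightarrow> 'v form" where
  "exs V b = foldr ex1 (sorted_list_of_set V) b"

definition alls :: "'v::linorder set \<Rightarrow> 'v form \<Rightarrow> 'v form" where
  "alls V b = foldr all1 (sorted_list_of_set V) b"

text \<open>A theory is a finite collection of formulas, identified with their conjunction
  (the empty theory is Top).\<close>
type_synonym 'v thy = "'v form list"

definition conj :: "'v thy \<Rightarrow> 'v form" where
  "conj T = foldr And T Top"

definition entails :: "'v thy \<Rightarrow> 'v form \<Rightarrow> bool" where
  "entails T b \<longleftrightarrow> (\<forall>s. eval s (conj T) \<longrightarrow> eval s b)"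

definition over :: "'v form \<Rightarrow> 'v set \<Rightarrow> bool" where
  "over a W \<longleftrightarrow> vars a \<subseteq> W"

definition theory_over :: "'v thy \<Rightarrow> 'v set \<Rightarrow> bool" where
  "theory_over T W \<longleftrightarrow> (\<forall>a\<in>set T. over a W)"

definition snc :: "'v::linorder form \<Rightarrow> 'v form \<Rightarrow> 'v set \<Rightarrow> 'v form" where
  "snc A T W = exs ((vars A \<union> vars T) - W) (And T A)"

definition wsc :: "'v::linorder form \<Rightarrow> 'v form \<Rightarrow> 'v set \<Rightarrow> 'v form" where
  "wsc A T W = alls ((vars A \<union> vars T) - W) (Imp T A)"

definition alpha_abstraction ::
  "'v thy \<Rightarrow> 'v thy \<Rightarrow> 'v set \<Rightarrow> 'v thy \<Rightarrow> 'v thy \<Rightarrow> bool" where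
  "alpha_abstraction TS TB VA Tl Tu \<longleftrightarrow>
     theory_over Tl VA \<and> theory_over Tu VA \<and>
     (\<forall>C. over C VA \<longrightarrow> entails TB (Imp C (conj Tl)) \<longrightarrow> entails TB (Imp C (conj TS))) \<and>
     (\<forall>D. over D VA \<longrightarrow> entails TB (Imp (conj Tu) D) \<longrightarrow> entails TB (Imp (conj TS) D))"

end

theory Submission
  imports Defs
begin

lemma eval_subst: "eval s (subst b p c) = eval (s(p := eval s c)) b"
  by (induction b) auto

lemma eval_ex1: "eval s (ex1 p b) = (\<exists>x. eval (s(p:=x)) b)"
  by (simp add: ex1_def eval_subst ex_bool_eq disj_commute)

lemma eval_all1: "eval s (all1 p b) = (\<forall>x. eval (s(p:=x)) b)"
  by (simp add: all1_def eval_subst all_bool_eq conj_commute)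

lemma eval_cong: "(\<forall>p\<in>vars a. s p = t p) \<Longrightarrow> eval s a = eval t a"
  by (induction a) auto

lemma finite_vars: "finite (vars a)"
  by (induction a) auto

lemma eval_foldr_ex:
  "eval s (foldr ex1 ps b) = (\<exists>t. (\<forall>q. q \<notin> set ps \<longrightarrow> t q = s q) \<and> eval t b)"
proof (induction ps arbitrary: s)
  case Nil
  show ?case
  proof
    assume "eval s (foldr ex1 [] b)" thus "\<exists>t. (\<forall>q. q \<notin> set [] \<longrightarrow> t q = s q) \<and> eval t b" by auto
  next
    assume "\<exists>t. (\<forall>q. q \<notin> set [] \<longrightarrow> t q = s q) \<and> eval t b"
    then obtain t where "\<forall>q. t q = s q" "eval t b" by auto
    hence "t = s" by (simp add: ext)
    thus "eval s (foldr ex1 [] b)" using \<open>eval t b\<close> by simp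
  qed
next
  case (Cons p ps)
  show ?case
  proof
    assume "eval s (foldr ex1 (p # ps) b)"
    then obtain x where "eval (s(p:=x)) (foldr ex1 ps b)" by (auto simp add: eval_ex1)
    then obtain t where t: "\<forall>q. q \<notin> set ps \<longrightarrow> t q = (s(p:=x)) q" "eval t b" using Cons.IH[of "s(p:=x)"] by blast
    have "\<forall>q. q \<notin> set (p#ps) \<longrightarrow> t q = s q" using t(1) by auto
    then show "\<exists>t. (\<forall>q. q \<notin> set (p#ps) \<longrightarrow> t q = s q) \<and> eval t b" using t(2) by blast
  next
    assume "\<exists>t. (\<forall>q. q \<notin> set (p#ps) \<longrightarrow> t q = s q) \<and> eval t b"
    then obtain t where t: "\<forall>q. q \<notin> set (p#ps) \<longrightarrow> t q = s q" "eval t b" by blast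
    have "\<forall>q. q \<notin> set ps \<longrightarrow> t q = (s(p:=t p)) q" using t by auto
    then have "eval (s(p:=t p)) (foldr ex1 ps b)" using Cons.IH[of "s(p:=t p)"] t(2) by blast
    then show "eval s (foldr ex1 (p # ps) b)" by (simp add: eval_ex1; blast)
  qed
qed

lemma eval_foldr_all:
  "eval s (foldr all1 ps b) = (\<forall>t. (\<forall>q. q \<notin> set ps \<longrightarrow> t q = s q) \<longrightarrow> eval t b)"
proof (induction ps arbitrary: s)
  case Nil
  show ?case
  proof
    assume "eval s (foldr all1 [] b)"
    thus "\<forall>t. (\<forall>q. q \<notin> set [] \<longrightarrow> t q = s q) \<longrightarrow> eval t b"
    proof (intro allI impI)
      fix t assume "eval s (foldr all1 [] b)" "\<forall>q. q \<notin> set [] \<longrightarrow> t q = s q"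
      hence "t = s" by (simp add: ext)
      thus "eval t b" using \<open>eval s (foldr all1 [] b)\<close> by simp
    qed
  next
    assume "\<forall>t. (\<forall>q. q \<notin> set [] \<longrightarrow> t q = s q) \<longrightarrow> eval t b"
    thus "eval s (foldr all1 [] b)" by simp
  qed
next
  case (Cons p ps)
  show ?case
  proof
    assume a: "eval s (foldr all1 (p # ps) b)"
    show "\<forall>t. (\<forall>q. q \<notin> set (p#ps) \<longrightarrow> t q = s q) \<longrightarrow> eval t b"
    proof (intro allI impI)
      fix t assume t: "\<forall>q. q \<notin> set (p#ps) \<longrightarrow> t q = s q"
      have "eval (s(p:=t p)) (foldr all1 ps b)" using a by (simp add: eval_all1)
      moreover have "\<forall>q. q \<notin> set ps \<longrightarrow> t q = (s(p:=t p)) q" using t by auto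
      ultimately show "eval t b" using Cons.IH[of "s(p:=t p)"] by blast
    qed
  next
    assume a: "\<forall>t. (\<forall>q. q \<notin> set (p#ps) \<longrightarrow> t q = s q) \<longrightarrow> eval t b"
    have "eval (s(p:=x)) (foldr all1 ps b)" for x
    proof -
      have "\<forall>t. (\<forall>q. q \<notin> set ps \<longrightarrow> t q = (s(p:=x)) q) \<longrightarrow> eval t b"
      proof (intro allI impI)
        fix t assume "\<forall>q. q \<notin> set ps \<longrightarrow> t q = (s(p:=x)) q"
        hence "\<forall>q. q \<notin> set (p#ps) \<longrightarrow> t q = s q" by auto
        thus "eval t b" using a by blast
      qed
      thus ?thesis using Cons.IH[of "s(p:=x)"] by blast
    qed
    then show "eval s (foldr all1 (p # ps) b)" by (simp add: eval_all1)
  qed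
qed

lemma eval_exs: "finite V \<Longrightarrow>
  eval s (exs V b) = (\<exists>t. (\<forall>q. q \<notin> V \<longrightarrow> t q = s q) \<and> eval t b)"
  unfolding exs_def eval_foldr_ex by simp

lemma eval_alls: "finite V \<Longrightarrow>
  eval s (alls V b) = (\<forall>t. (\<forall>q. q \<notin> V \<longrightarrow> t q = s q) \<longrightarrow> eval t b)"
  unfolding alls_def eval_foldr_all by simp

lemma vars_conj: "theory_over T W \<Longrightarrow> over (conj T) W"
  unfolding theory_over_def over_def conj_def by (induction T) auto

theorem mainTheorem4:
  fixes TS TB Tl Tu :: "'v::linorder thy" and VA :: "'v set"
  assumes "alpha_abstraction TS TB VA Tl Tu"
    and "entails TB (Iff (conj Tl) (conj Tu))"
  shows "entails TB (Iff (conj Tl) (wsc (conj TS) (conj TB) VA))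
       \<and> entails TB (Iff (conj Tu) (snc (conj TS) (conj TB) VA))
       \<and> (\<forall>C. over C VA \<longrightarrow>
              (entails TB (Imp C (conj TS)) \<longleftrightarrow> entails TB (Imp C (conj Tl))))
       \<and> (\<forall>D. over D VA \<longrightarrow>
              (entails TB (Imp (conj TS) D) \<longleftrightarrow> entails TB (Imp (conj Tu) D)))"
proof -
  note A = assms(1)[unfolded alpha_abstraction_def]
  have ol: "over (conj Tl) VA" and ou: "over (conj Tu) VA" using A vars_conj by blast+
  have "entails TB (Imp (conj Tl) (conj Tl))" by (simp add: entails_def)
  hence h1: "entails TB (Imp (conj Tl) (conj TS))" using A ol by blast
  have "entails TB (Imp (conj Tu) (conj Tu))" by (simp add: entails_def)
  hence h2: "entails TB (Imp (conj TS) (conj Tu))" using A ou by blast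
  have eq: "\<And>s. eval s (conj TB) \<Longrightarrow> eval s (conj TS) = eval s (conj Tl)"
   and equ: "\<And>s. eval s (conj TB) \<Longrightarrow> eval s (conj Tu) = eval s (conj Tl)"
    using h1 h2 assms(2) unfolding entails_def by auto
  define V where "V = (vars (conj TS) \<union> vars (conj TB)) - VA"
  have fV: "finite V" unfolding V_def using finite_vars by auto
  have agree: "\<And>s t. \<forall>q. q \<notin> V \<longrightarrow> t q = s q \<Longrightarrow> eval t (conj Tl) = eval s (conj Tl)"
    by (rule eval_cong) (use ol in \<open>auto simp: over_def V_def\<close>)
  have g1: "entails TB (Iff (conj Tl) (wsc (conj TS) (conj TB) VA))"
    unfolding entails_def wsc_def V_def[symmetric]
  proof (intro allI impI)
    fix s assume sB: "eval s (conj TB)"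
    have "eval s (alls V (Imp (conj TB) (conj TS))) = eval s (conj Tl)"
    proof
      assume "eval s (alls V (Imp (conj TB) (conj TS)))"
      hence "eval s (Imp (conj TB) (conj TS))" unfolding eval_alls[OF fV] by blast
      thus "eval s (conj Tl)" using sB eq by simp
    next
      assume l: "eval s (conj Tl)"
      show "eval s (alls V (Imp (conj TB) (conj TS)))" unfolding eval_alls[OF fV]
      proof (intro allI impI)
        fix t assume "\<forall>q. q \<notin> V \<longrightarrow> t q = s q"
        hence "eval t (conj Tl)" using agree l by blast
        thus "eval t (Imp (conj TB) (conj TS))" using eq by simp
      qed
    qed
    thus "eval s (Iff (conj Tl) (alls V (Imp (conj TB) (conj TS))))" by simp
  qed
  have g2: "entails TB (Iff (conj Tu) (snc (conj TS) (conj TB) VA))"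
    unfolding entails_def snc_def V_def[symmetric]
  proof (intro allI impI)
    fix s assume sB: "eval s (conj TB)"
    have "eval s (exs V (And (conj TB) (conj TS))) = eval s (conj Tl)"
    proof
      assume "eval s (exs V (And (conj TB) (conj TS)))"
      then obtain t where t: "\<forall>q. q \<notin> V \<longrightarrow> t q = s q" "eval t (And (conj TB) (conj TS))"
        unfolding eval_exs[OF fV] by blast
      hence "eval t (conj Tl)" using eq by auto
      thus "eval s (conj Tl)" using agree t(1) by blast
    next
      assume l: "eval s (conj Tl)"
      hence "eval s (And (conj TB) (conj TS))" using sB eq by simp
      thus "eval s (exs V (And (conj TB) (conj TS)))" unfolding eval_exs[OF fV] by blast
    qed
    thus "eval s (Iff (conj Tu) (exs V (And (conj TB) (conj TS))))" using equ sB by simp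
  qed
  show ?thesis using g1 g2 eq equ unfolding entails_def by auto
qed

end
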